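(* Let $\{x^k\}$ be generated by the ABP algorithm described in the context and assume (A1)–(A6), (A7') and (A8) below: (A1) $\mathcal F$ is continuously differentiable; (A2) $C$ and $Q$ are nonempty, closed and convex, and $z_i^*>-\infty$ for each $i$; (A3) each $f_i$ is convex; (A4) $\Omega\neq\emptyset$; (A5) $\lambda_k>0$, $\sum_k\lambda_k=\infty$, $\sum_k\lambda_k^2<\infty$; (A6) $\underline\alpha\le\alpha_k\le\bar\alpha$, $\underline\beta\le\beta_k\le\bar\beta$, $\underline\gamma\le\gamma_k\le\bar\gamma$ for all $k$, for constants $0<\underline\alpha\le\bar\alpha$, $0<\underline\beta\le\bar\beta$, $0<\underline\gamma\le\bar\gamma$; (A7') $\sigma:=\varphi^*-\varphi_{\mathrm{lb}}\le\varepsilon_0$ for a known constant $\varepsilon_0\ge0$; (A8) $\sup_k\|x^k\|\le B<\infty$. Let $\bar M<\infty$ be a uniform bound $\|d^k\|\le\bar M$ for all $k$ (which exists under these assumptions), $\bar\eta:=\max(\mu,\bar M)$ and $C_*:=\bar\alpha\bar\eta/\mu$. Then there exist a subsequence $\{k_j\}$ and a constant $\ell_*\in[0,C_*\varepsilon_0]$ with $\Phi_{k_j}\to\ell_*$ such that every cluster point $\hat x$ of $\{x^{k_j}\}$ satisfies: (i) $H(\hat x)\le \ell_*/\underline\beta\le C_*\varepsilon_0/\underline\beta$, i.e. $\mathrm{dist}(\hat x,C)\le\sqrt{2C_*\varepsilon_0/\underline\beta}$; (ii) $G(\hat x)\le\ell_*/\underline\gamma\le C_*\varepsilon_0/\underline\gamma$,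 i.e. $\mathrm{dist}(\mathcal F(\hat x),Q^+)\le\sqrt{2C_*\varepsilon_0/\underline\gamma}$; (iii) $\varphi(\hat x)\le\varphi_{\mathrm{lb}}+\ell_*/\underline\alpha\le\varphi^*+C_*\varepsilon_0/\underline\alpha$. Moreover, when $\varepsilon_0=0$, one has $\ell_*=0$, all three bounds vanish, and $\hat x\in\Omega$.
   Context: Let $n,m\ge1$, $\mathcal F=(f_1,\dots,f_m)\colon\mathbb R^n\to\mathbb R^m$, $C\subset\mathbb R^n$, $Q\subset\mathbb R^m$, and $Q^+:=Q-\mathbb R^m_+=\{y-u:y\in Q,u\in\mathbb R^m_+\}$. $P_S$ denotes Euclidean projection onto a nonempty closed convex set $S$. Let $z_i^*:=\inf_{x\in C}f_i(x)$, fix $r\in\mathbb R^m$ with all $r_i>0$, $\sum_ir_i=1$. Define $\varphi(x):=\max_i r_i(f_i(x)-z_i^* )$, $H(x):=\tfrac12\mathrm{dist}^2(x,C)$, $G(x):=\tfrac12\mathrm{dist}^2(\mathcal F(x),Q^+)$, $\mathcal S:=\{x:H(x)=0,G(x)=0\}$, $\varphi^*:=\inf_{\mathcal S}\varphi$, $\Omega:=\{x\in\mathcal S:\varphi(x)=\varphi^*\}$, $\varphi_{\mathrm{lb}}:=\inf_{x\in C}\varphi(x)$. ABP algorithm: given $x^0\in\mathbb R^n$, $\mu>0$, positive sequences $\{\alpha_k\},\{\beta_k\},\{\gamma_k\},\{\lambda_k\}$, for each $k$: $p^k:=P_{Q^+}(\mathcal F(x^k))$, $\rho^k:=\mathcal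 F(x^k)-p^k$, $z^k:=x^k-P_C(x^k)$, $v^k:=J_{\mathcal F}(x^k)^T\rho^k$, $w^k:=r_{i^*}\nabla f_{i^*}(x^k)$ for an arbitrary $i^*\in\arg\max_ir_i(f_i(x^k)-z_i^* )$, $\Delta_k:=\varphi(x^k)-\varphi_{\mathrm{lb}}$, $d^k:=\alpha_k\mathbf 1_{\{\Delta_k\ge0\}}w^k+\beta_kz^k+\gamma_kv^k$, $\eta_k:=\max(\mu,\|d^k\|)$, $x^{k+1}:=x^k-(\lambda_k/\eta_k)d^k$. Notation: $H_k:=H(x^k)$, $G_k:=G(x^k)$, $\Delta_k^+:=\max(\Delta_k,0)$, $\Phi_k:=\alpha_k\Delta_k^++\beta_kH_k+\gamma_kG_k$. *)

theory Defs
  imports "HOL-Analysis.Analysis"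
begin

definition zstar :: "(real^'n \<Rightarrow> real^'m) \<Rightarrow> (real^'n) set \<Rightarrow> 'm \<Rightarrow> real" where
  "zstar F C i = Inf ((\<lambda>x. F x $ i) ` C)"

definition phi :: "(real^'n \<Rightarrow> real^'m::finite) \<Rightarrow> (real^'n) set \<Rightarrow> real^'m \<Rightarrow> real^'n \<Rightarrow> real" where
  "phi F C r x = Max (range (\<lambda>i. r $ i * (F x $ i - zstar F C i)))"

definition Hfun :: "(real^'n) set \<Rightarrow> real^'n \<Rightarrow> real" where
  "Hfun C x = (infdist x C)\<^sup>2 / 2"

definition Qplus :: "(real^'m) set \<Rightarrow> (real^'m) set" where
  "Qplus Q = {y - u | y u. y \<in> Q \<and> (\<forall>i. 0 \<le> u $ i)}"

definition Gfun :: "(real^'n \<Rightarrow> real^'m) \<Rightarrow> (real^'m) set \<Rightarrow> real^'n \<Rightarrow> real" where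
  "Gfun F Q x = (infdist (F x) (Qplus Q))\<^sup>2 / 2"

definition feas :: "(real^'n \<Rightarrow> real^'m) \<Rightarrow> (real^'n) set \<Rightarrow> (real^'m) set \<Rightarrow> (real^'n) set" where
  "feas F C Q = {x. Hfun C x = 0 \<and> Gfun F Q x = 0}"

definition phistar :: "(real^'n \<Rightarrow> real^'m::finite) \<Rightarrow> (real^'n) set \<Rightarrow> (real^'m) set \<Rightarrow> real^'m \<Rightarrow> real" where
  "phistar F C Q r = Inf (phi F C r ` feas F C Q)"

definition Omega :: "(real^'n \<Rightarrow> real^'m::finite) \<Rightarrow> (real^'n) set \<Rightarrow> (real^'m) set \<Rightarrow> real^'m \<Rightarrow> (real^'n) set" where
  "Omega F C Q r = {x \<in> feas F C Q. phi F C r x = phistar F C Q r}"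

definition philb :: "(real^'n \<Rightarrow> real^'m::finite) \<Rightarrow> (real^'n) set \<Rightarrow> real^'m \<Rightarrow> real" where
  "philb F C r = Inf (phi F C r ` C)"

text \<open>Search direction d^k of the ABP algorithm at the iterate xk, with weights a = alpha_k,
  b = beta_k, c = gamma_k and selected index i (an element of the argmax).
  grad i y is the gradient of f_i at y, so J_F(y)^T rho = sum_i rho_i grad i y.
  The projection onto Q^+ is taken onto its closure (equal to Q^+ whenever Q^+ is closed).\<close>
definition abp_dir ::
  "(real^'n \<Rightarrow> real^'m::finite) \<Rightarrow> ('m \<Rightarrow> real^'n \<Rightarrow> real^'n) \<Rightarrow> (real^'n) set \<Rightarrow> (real^'m) set
    \<Rightarrow> real^'m \<Rightarrow> real \<Rightarrow> real \<Rightarrow> real \<Rightarrow> 'm \<Rightarrow> real^'n \<Rightarrow> real^'n" where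
  "abp_dir F grad C Q r a b c i xk =
     (let p = closest_point (closure (Qplus Q)) (F xk);
          \<rho> = F xk - p;
          z = xk - closest_point C xk;
          v = (\<Sum>j\<in>UNIV. (\<rho> $ j) *\<^sub>R grad j xk);
          w = (r $ i) *\<^sub>R grad i xk;
          \<Delta> = phi F C r xk - philb F C r
      in (if \<Delta> \<ge> 0 then a else 0) *\<^sub>R w + b *\<^sub>R z + c *\<^sub>R v)"

definition Phival ::
  "(real^'n \<Rightarrow> real^'m::finite) \<Rightarrow> (real^'n) set \<Rightarrow> (real^'m) set \<Rightarrow> real^'m
    \<Rightarrow> real \<Rightarrow> real \<Rightarrow> real \<Rightarrow> real^'n \<Rightarrow> real" where
  "Phival F C Q r a b c xk =
     a * max (phi F C r xk - philb F C r) 0 + b * Hfun C xk + c * Gfun F Q xk"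

end

theory Submission
  imports Defs
begin

lemma grad_ineq:
  fixes f :: "'a::euclidean_space \<Rightarrow> real"
  assumes cv: "convex_on UNIV f" and df: "(f has_derivative (\<lambda>h. g \<bullet> h)) (at x)"
  shows "f y \<ge> f x + g \<bullet> (y - x)"
proof -
  define d where "d = y - x"
  define q where "q = (\<lambda>t::real. f (x + t *\<^sub>R d))"
  have cq: "convex_on UNIV q"
  proof (rule convex_onI)
    fix t a b :: real assume t: "0<t" "t<1"
    have e: "x + ((1-t)*a + t*b) *\<^sub>R d = (1-t) *\<^sub>R (x + a*\<^sub>R d) + t *\<^sub>R (x + b *\<^sub>R d)"
      by (simp add: algebra_simps)
    show "q ((1-t)*\<^sub>R a + t *\<^sub>R b) \<le> (1-t)*q a + t*q b"
      using convex_onD[OF cv, of t "x + a*\<^sub>R d" "x + b *\<^sub>R d"] t unfolding q_def by (simp add: e)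
  qed simp
  have h1: "((\<lambda>t. x + t *\<^sub>R d) has_derivative (\<lambda>t. t *\<^sub>R d)) (at 0)"
    by (auto intro!: derivative_eq_intros)
  have df0: "(f has_derivative (\<lambda>h. g \<bullet> h)) (at ((\<lambda>t. x + t *\<^sub>R d) 0))" using df by simp
  have "((f \<circ> (\<lambda>t. x + t *\<^sub>R d)) has_derivative ((\<lambda>h. g \<bullet> h) \<circ> (\<lambda>t. t *\<^sub>R d))) (at 0)"
    by (rule diff_chain_at[OF h1 df0])
  moreover have "((\<lambda>h. g \<bullet> h) \<circ> (\<lambda>t. t *\<^sub>R d)) = (*) (g \<bullet> d)"
    by (auto simp: fun_eq_iff)
  ultimately have "(q has_field_derivative (g \<bullet> d)) (at 0)"
    unfolding has_field_derivative_def q_def by (simp add: o_def)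
  then have "q 1 - q 0 \<ge> (g \<bullet> d) * (1 - 0)"
    by (intro convex_on_imp_above_tangent[OF cq]) auto
  then show ?thesis by (simp add: q_def d_def)
qed

lemma subseq_from_freq:
  fixes \<Phi> :: "nat \<Rightarrow> real"
  assumes fr: "\<forall>e>0. \<forall>N. \<exists>k\<ge>N. \<Phi> k < K + e" and nn: "\<forall>k. 0 \<le> \<Phi> k"
  shows "\<exists>kj ell. strict_mono kj \<and> 0 \<le> ell \<and> ell \<le> K \<and> (\<lambda>j. \<Phi> (kj j)) \<longlonglongrightarrow> ell"
proof -
  have "\<forall>N j. \<exists>k. k \<ge> N \<and> \<Phi> k < K + inverse (real (Suc j))"
    using fr by simp
  then obtain pk where pk: "\<And>N j. pk N j \<ge> N \<and> \<Phi> (pk N j) < K + inverse (real (Suc j))"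
    by metis
  define s where "s = rec_nat (pk 0 0) (\<lambda>j k. pk (Suc k) (Suc j))"
  have s0: "s 0 = pk 0 0" and sS: "\<And>j. s (Suc j) = pk (Suc (s j)) (Suc j)" by (simp_all add: s_def)
  have smono: "strict_mono s"
    unfolding strict_mono_Suc_iff using sS pk by (metis Suc_le_lessD)
  have sb: "\<And>j. \<Phi> (s j) < K + inverse (real (Suc j))"
    by (metis s0 sS pk old.nat.exhaust)
  have "bounded (range (\<lambda>j. \<Phi> (s j)))"
  proof (rule bounded_subset[OF bounded_closed_interval[of 0 "K+1"]])
    show "range (\<lambda>j. \<Phi> (s j)) \<subseteq> {0..K+1}"
    proof clarsimp
      fix j
      have "inverse (real (Suc j)) \<le> 1" by (simp add: inverse_le_1_iff)
      moreover have "0 \<le> \<Phi> (s j)" using nn by blast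
      ultimately show "0 \<le> \<Phi> (s j) \<and> \<Phi> (s j) \<le> K + 1" using sb[of j] by linarith
    qed
  qed
  then obtain ell h where h: "strict_mono h" "((\<lambda>j. \<Phi> (s j)) \<circ> h) \<longlonglongrightarrow> ell"
    using bounded_imp_convergent_subsequence by blast
  have lim: "(\<lambda>j. \<Phi> ((s \<circ> h) j)) \<longlonglongrightarrow> ell" using h(2) by (simp add: o_def)
  have "0 \<le> ell" by (rule LIMSEQ_le_const[OF lim]) (use nn in auto)
  moreover have "ell \<le> K"
  proof (rule LIMSEQ_le[OF lim])
    show "(\<lambda>j. K + inverse (real (Suc j))) \<longlonglongrightarrow> K"
      using tendsto_add[OF tendsto_const LIMSEQ_inverse_real_of_nat, of K] by simp
    show "\<exists>N. \<forall>n\<ge>N. \<Phi> ((s \<circ> h) n) \<le> K + inverse (real (Suc n))"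
    proof (intro exI allI impI)
      fix n
      have "n \<le> h n" using h(1) by (rule strict_mono_imp_increasing)
      then have "inverse (real (Suc (h n))) \<le> inverse (real (Suc n))"
        by (simp add: le_imp_inverse_le)
      then show "\<Phi> ((s \<circ> h) n) \<le> K + inverse (real (Suc n))" using sb[of "h n"] unfolding o_def by linarith
    qed
  qed
  ultimately show ?thesis using lim smono h(1) strict_mono_o by blast
qed

lemma Qplus_convex: fixes Q :: "(real^'m) set" shows "convex Q \<Longrightarrow> convex (Qplus Q)"
  unfolding convex_def Qplus_def
proof (clarsimp)
  fix y u y' u' :: "real^'m" and a b :: real
  assume cQ: "\<forall>x\<in>Q. \<forall>y\<in>Q. \<forall>u\<ge>0. \<forall>v\<ge>0. u + v = 1 \<longrightarrow> u *\<^sub>R x + v *\<^sub>R y \<in> Q"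
    and h: "y \<in> Q" "\<forall>i. 0 \<le> u $ i" "y' \<in> Q" "\<forall>i. 0 \<le> u' $ i" "0 \<le> a" "0 \<le> b" "a + b = 1"
  show "\<exists>ya ua. a *\<^sub>R (y - u) + b *\<^sub>R (y' - u') = ya - ua \<and> ya \<in> Q \<and> (\<forall>i. 0 \<le> ua $ i)"
  proof (intro exI conjI)
    show "a *\<^sub>R (y - u) + b *\<^sub>R (y' - u') = (a *\<^sub>R y + b *\<^sub>R y') - (a *\<^sub>R u + b *\<^sub>R u')"
      by (simp add: scaleR_diff_right)
    show "a *\<^sub>R y + b *\<^sub>R y' \<in> Q" using cQ h by blast
    show "\<forall>i. 0 \<le> (a *\<^sub>R u + b *\<^sub>R u') $ i" using h by simp
  qed
qed

lemma Qplus_ne: fixes Q :: "(real^'m) set" assumes "Q \<noteq> {}" shows "Qplus Q \<noteq> {}"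
proof -
  obtain q where "q \<in> Q" using assms by blast
  then have "q - 0 \<in> Qplus Q" unfolding Qplus_def by fastforce
  then show ?thesis by blast
qed

lemma Qplus_down: 
  assumes "y \<in> closure (Qplus Q)" "\<forall>i. 0 \<le> u $ i"
  shows "y - u \<in> closure (Qplus Q)"
proof -
  obtain s where s: "\<And>n. s n \<in> Qplus Q" "s \<longlonglongrightarrow> y" using assms(1) closure_sequential by metis
  have "\<And>n. s n - u \<in> Qplus Q"
  proof -
    fix n
    obtain a b where "s n = a - b" "a \<in> Q" "\<forall>i. 0 \<le> b $ i" using s(1)[of n] unfolding Qplus_def by auto
    then show "s n - u \<in> Qplus Q" unfolding Qplus_def using assms(2)
      by (auto intro!: exI[of _ a] exI[of _ "b + u"] simp: algebra_simps add_nonneg_nonneg)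
  qed
  moreover have "(\<lambda>n. s n - u) \<longlonglongrightarrow> y - u" using s(2) by (intro tendsto_intros)
  ultimately have "\<exists>t. (\<forall>n. t n \<in> Qplus Q) \<and> t \<longlonglongrightarrow> y - u"
    by (intro exI[of _ "\<lambda>n. s n - u"]) simp
  then show ?thesis unfolding closure_sequential .
qed

lemma proj_nonneg:
  fixes Q :: "(real^'m) set"
  assumes "convex Q" "Q \<noteq> {}"
  shows "0 \<le> (a - closest_point (closure (Qplus Q)) a) $ i"
proof -
  let ?S = "closure (Qplus Q)"
  let ?p = "closest_point ?S a"
  have cS: "convex ?S" "closed ?S" "?S \<noteq> {}" using Qplus_convex[OF assms(1)] Qplus_ne[OF assms(2)]
    by (auto simp: convex_closure)
  have "?p \<in> ?S" using closest_point_in_set[OF cS(2,3)] .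
  then have "?p - axis i 1 \<in> ?S" by (intro Qplus_down) (auto simp: axis_def)
  from closest_point_dot[OF cS(1,2) this, of a]
  show ?thesis by (simp add: inner_axis inner_minus_right)
qed

theorem theorem2:
  fixes F :: "real^'n \<Rightarrow> real^'m::finite"
    and grad :: "'m \<Rightarrow> real^'n \<Rightarrow> real^'n"
    and C :: "(real^'n) set" and Q :: "(real^'m) set"
    and r :: "real^'m"
    and x :: "nat \<Rightarrow> real^'n" and istar :: "nat \<Rightarrow> 'm"
    and \<mu> :: real and \<alpha> \<beta> \<gamma> lam :: "nat \<Rightarrow> real"
    and \<alpha>lo \<alpha>hi \<beta>lo \<beta>hi \<gamma>lo \<gamma>hi eps0 B Mbar :: real
  assumes r_pos: "\<forall>i. r $ i > 0" and r_sum: "(\<Sum>i\<in>UNIV. r $ i) = 1"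
    and A1_deriv: "\<forall>i y. ((\<lambda>u. F u $ i) has_derivative (\<lambda>h. grad i y \<bullet> h)) (at y)"
    and A1_cont: "\<forall>i. continuous_on UNIV (grad i)"
    and A2_C: "C \<noteq> {}" "closed C" "convex C"
    and A2_Q: "Q \<noteq> {}" "closed Q" "convex Q"
    and A2_z: "\<forall>i. bdd_below ((\<lambda>u. F u $ i) ` C)"
    and A3: "\<forall>i. convex_on UNIV (\<lambda>u. F u $ i)"
    and A4: "Omega F C Q r \<noteq> {}"
    and A5: "\<forall>k. lam k > 0" "\<not> summable lam" "summable (\<lambda>k. (lam k)\<^sup>2)"
    and A6: "0 < \<alpha>lo" "\<alpha>lo \<le> \<alpha>hi" "0 < \<beta>lo" "\<beta>lo \<le> \<beta>hi" "0 < \<gamma>lo" "\<gamma>lo \<le> \<gamma>hi"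
      "\<forall>k. \<alpha>lo \<le> \<alpha> k \<and> \<alpha> k \<le> \<alpha>hi"
      "\<forall>k. \<beta>lo \<le> \<beta> k \<and> \<beta> k \<le> \<beta>hi"
      "\<forall>k. \<gamma>lo \<le> \<gamma> k \<and> \<gamma> k \<le> \<gamma>hi"
    and A7': "0 \<le> eps0" "phistar F C Q r - philb F C r \<le> eps0"
    and A8: "\<forall>k. norm (x k) \<le> B"
    and mu_pos: "\<mu> > 0"
    and istar_argmax: "\<forall>k j. r $ j * (F (x k) $ j - zstar F C j)
                          \<le> r $ istar k * (F (x k) $ istar k - zstar F C (istar k))"
    and iter: "\<forall>k. x (Suc k) = x k -
        (lam k / max \<mu> (norm (abp_dir F grad C Q r (\<alpha> k) (\<beta> k) (\<gamma> k) (istar k) (x k))))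
          *\<^sub>R abp_dir F grad C Q r (\<alpha> k) (\<beta> k) (\<gamma> k) (istar k) (x k)"
    and Mbar: "\<forall>k. norm (abp_dir F grad C Q r (\<alpha> k) (\<beta> k) (\<gamma> k) (istar k) (x k)) \<le> Mbar"
  shows "\<exists>kj ell. strict_mono kj \<and> 0 \<le> ell \<and> ell \<le> (\<alpha>hi * max \<mu> Mbar / \<mu>) * eps0 \<and>
     (\<lambda>j. Phival F C Q r (\<alpha> (kj j)) (\<beta> (kj j)) (\<gamma> (kj j)) (x (kj j))) \<longlonglongrightarrow> ell \<and>
     (\<forall>xh. (\<exists>h. strict_mono h \<and> (x \<circ> kj \<circ> h) \<longlonglongrightarrow> xh) \<longrightarrow>
        Hfun C xh \<le> ell / \<beta>lo \<and> ell / \<beta>lo \<le> (\<alpha>hi * max \<mu> Mbar / \<mu>) * eps0 / \<beta>lo \<and>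
        infdist xh C \<le> sqrt (2 * (\<alpha>hi * max \<mu> Mbar / \<mu>) * eps0 / \<beta>lo) \<and>
        Gfun F Q xh \<le> ell / \<gamma>lo \<and> ell / \<gamma>lo \<le> (\<alpha>hi * max \<mu> Mbar / \<mu>) * eps0 / \<gamma>lo \<and>
        infdist (F xh) (Qplus Q) \<le> sqrt (2 * (\<alpha>hi * max \<mu> Mbar / \<mu>) * eps0 / \<gamma>lo) \<and>
        phi F C r xh \<le> philb F C r + ell / \<alpha>lo \<and>
        philb F C r + ell / \<alpha>lo \<le> phistar F C Q r + (\<alpha>hi * max \<mu> Mbar / \<mu>) * eps0 / \<alpha>lo \<and>
        (eps0 = 0 \<longrightarrow> ell = 0 \<and> xh \<in> Omega F C Q r))"
proof -
  let ?P = "closure (Qplus Q)"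
  define d where "d k = abp_dir F grad C Q r (\<alpha> k) (\<beta> k) (\<gamma> k) (istar k) (x k)" for k
  define \<Phi> where "\<Phi> k = Phival F C Q r (\<alpha> k) (\<beta> k) (\<gamma> k) (x k)" for k
  define K where "K = \<alpha>hi * eps0"
  have cP: "convex ?P" "closed ?P" "?P \<noteq> {}"
    using Qplus_convex[OF A2_Q(3)] Qplus_ne[OF A2_Q(1)] by (auto simp: convex_closure)
  have phi_ge: "\<And>y j. r$j * (F y $ j - zstar F C j) \<le> phi F C r y"
    unfolding phi_def by (rule Max_ge) auto
  have phi_le: "\<And>y c. (\<And>j. r$j * (F y $ j - zstar F C j) \<le> c) \<Longrightarrow> phi F C r y \<le> c"
    unfolding phi_def by (subst Max_le_iff) auto
  have phi_xk: "\<And>k. phi F C r (x k) = r $ istar k * (F (x k) $ istar k - zstar F C (istar k))"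
    using phi_le phi_ge istar_argmax by (meson antisym)
  have zle: "\<And>y j. y \<in> C \<Longrightarrow> zstar F C j \<le> F y $ j"
    unfolding zstar_def by (rule cInf_lower) (use A2_z in auto)
  have phi_nn: "\<And>y. y \<in> C \<Longrightarrow> 0 \<le> phi F C r y"
  proof -
    fix y assume "y \<in> C"
    then have "0 \<le> r$j * (F y $ j - zstar F C j)" for j
      using zle[of y j] r_pos by (simp add: less_imp_le)
    then show "0 \<le> phi F C r y" using phi_ge order_trans by blast
  qed
  have feasC: "feas F C Q \<subseteq> C"
  proof
    fix y assume "y \<in> feas F C Q"
    then have "infdist y C = 0" by (simp add: feas_def Hfun_def)
    then show "y \<in> C" using in_closure_iff_infdist_zero[OF A2_C(1)] A2_C(2) closure_closed by blast
  qed
  obtain xs where xs: "xs \<in> Omega F C Q r" using A4 by blast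
  have xsF: "xs \<in> feas F C Q" and phixs: "phi F C r xs = phistar F C Q r"
    using xs by (auto simp: Omega_def)
  have xsC: "xs \<in> C" using xsF feasC by blast
  have FxsP: "F xs \<in> ?P"
  proof -
    have "infdist (F xs) (Qplus Q) = 0" using xsF by (simp add: feas_def Gfun_def)
    then show ?thesis using in_closure_iff_infdist_zero[OF Qplus_ne[OF A2_Q(1)]] by blast
  qed
  have bddC: "bdd_below (phi F C r ` C)" using phi_nn by (auto intro!: bdd_belowI[of _ 0])
  have lb_le: "philb F C r \<le> phistar F C Q r"
    unfolding philb_def phistar_def
    by (rule cInf_superset_mono) (use xsF feasC bddC in auto)
  have sig: "0 \<le> phistar F C Q r - philb F C r" "phistar F C Q r - philb F C r \<le> eps0"
    using lb_le A7' by auto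
  have Kn: "0 \<le> K" unfolding K_def using A6 A7' by auto
  have inf_eq: "\<And>S a. closed S \<Longrightarrow> S \<noteq> {} \<Longrightarrow> infdist a S = norm (a - closest_point S a)"
    by (simp add: infdist_eq_setdist setdist_closest_point dist_norm)
  have key: "\<Phi> k - K \<le> d k \<bullet> (x k - xs)" for k
  proof -
    define y where "y = x k"
    define p where "p = closest_point ?P (F y)"
    define \<rho> where "\<rho> = F y - p"
    define cz where "cz = closest_point C y"
    define z where "z = y - cz"
    define v where "v = (\<Sum>j\<in>UNIV. (\<rho> $ j) *\<^sub>R grad j y)"
    define i where "i = istar k"
    define w where "w = (r $ i) *\<^sub>R grad i y"
    define \<Delta> where "\<Delta> = phi F C r y - philb F C r"
    have dk: "d k = (if \<Delta> \<ge> 0 then \<alpha> k else 0) *\<^sub>R w + \<beta> k *\<^sub>R z + \<gamma> k *\<^sub>R v"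
      unfolding d_def abp_dir_def Let_def y_def p_def \<rho>_def cz_def z_def v_def i_def w_def \<Delta>_def
      by simp
    have Phik: "\<Phi> k = \<alpha> k * max \<Delta> 0 + \<beta> k * Hfun C y + \<gamma> k * Gfun F Q y"
      unfolding \<Phi>_def Phival_def \<Delta>_def y_def by simp
    have H: "Hfun C y = (norm z)\<^sup>2 / 2"
      unfolding Hfun_def z_def cz_def using inf_eq[OF A2_C(2,1)] by simp
    have G: "Gfun F Q y = (norm \<rho>)\<^sup>2 / 2"
    proof -
      have "infdist (F y) (Qplus Q) = infdist (F y) ?P"
        by (simp add: infdist_eq_setdist)
      also have "\<dots> = norm \<rho>" unfolding \<rho>_def p_def using inf_eq[OF cP(2,3)] by simp
      finally show ?thesis unfolding Gfun_def by simp
    qed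
    have zi: "(norm z)\<^sup>2 \<le> z \<bullet> (y - xs)"
    proof -
      have "(y - cz) \<bullet> (xs - cz) \<le> 0" unfolding cz_def
        by (rule closest_point_dot[OF A2_C(3,2) xsC])
      moreover have "y - xs = z - (xs - cz)" unfolding z_def by simp
      ultimately show ?thesis unfolding z_def by (simp add: power2_norm_eq_inner inner_diff_right)
    qed
    have rho_nn: "0 \<le> \<rho> $ j" for j
      unfolding \<rho>_def p_def by (rule proj_nonneg[OF A2_Q(3,1)])
    have vi: "(norm \<rho>)\<^sup>2 \<le> v \<bullet> (y - xs)"
    proof -
      have "v \<bullet> (y - xs) = (\<Sum>j\<in>UNIV. \<rho> $ j * (grad j y \<bullet> (y - xs)))"
        unfolding v_def by (simp add: inner_sum_left)
      also have "\<dots> \<ge> (\<Sum>j\<in>UNIV. \<rho> $ j * (F y $ j - F xs $ j))"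
      proof (rule sum_mono)
        fix j
        have "F xs $ j \<ge> F y $ j + grad j y \<bullet> (xs - y)"
          by (rule grad_ineq) (use A3 A1_deriv in auto)
        moreover have "grad j y \<bullet> (xs - y) = - (grad j y \<bullet> (y - xs))"
          by (simp add: inner_diff_right)
        ultimately have "F y $ j - F xs $ j \<le> grad j y \<bullet> (y - xs)" by linarith
        then show "\<rho> $ j * (F y $ j - F xs $ j) \<le> \<rho> $ j * (grad j y \<bullet> (y - xs))"
          using rho_nn[of j] by (rule mult_left_mono)
      qed
      finally have 1: "\<rho> \<bullet> (F y - F xs) \<le> v \<bullet> (y - xs)"
        by (simp add: inner_vec_def)
      have 2: "\<rho> \<bullet> (F xs - p) \<le> 0" unfolding \<rho>_def p_def
        by (rule closest_point_dot[OF cP(1,2) FxsP])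
      have "\<rho> \<bullet> (F y - F xs) = \<rho> \<bullet> \<rho> - \<rho> \<bullet> (F xs - p)"
        unfolding \<rho>_def by (simp add: inner_diff_right)
      then show ?thesis using 1 2 by (simp add: power2_norm_eq_inner)
    qed
    have wi: "phi F C r y - phistar F C Q r \<le> w \<bullet> (y - xs)"
    proof -
      have "F xs $ i \<ge> F y $ i + grad i y \<bullet> (xs - y)"
        by (rule grad_ineq) (use A3 A1_deriv in auto)
      moreover have "grad i y \<bullet> (xs - y) = - (grad i y \<bullet> (y - xs))"
        by (simp add: inner_diff_right)
      ultimately have "F y $ i - F xs $ i \<le> grad i y \<bullet> (y - xs)" by linarith
      then have a: "r $ i * (F y $ i - F xs $ i) \<le> w \<bullet> (y - xs)"
        unfolding w_def using r_pos by (simp add: mult_left_mono less_imp_le)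
      have b: "phi F C r y = r $ i * (F y $ i - zstar F C i)" unfolding y_def i_def by (rule phi_xk)
      have c: "r $ i * (F xs $ i - zstar F C i) \<le> phistar F C Q r" using phi_ge[of i xs] phixs by simp
      have "phi F C r y - phistar F C Q r \<le> r $ i * (F y $ i - F xs $ i)"
        using b c by (simp add: algebra_simps)
      then show ?thesis using a by linarith
    qed
    have dk_in: "d k \<bullet> (x k - xs) = (if \<Delta> \<ge> 0 then \<alpha> k else 0) * (w \<bullet> (y - xs))
        + \<beta> k * (z \<bullet> (y - xs)) + \<gamma> k * (v \<bullet> (y - xs))"
      unfolding dk y_def by (simp add: inner_add_left)
    have ab: "\<alpha>lo \<le> \<alpha> k" "\<alpha> k \<le> \<alpha>hi" "\<beta>lo \<le> \<beta> k" "\<gamma>lo \<le> \<gamma> k" using A6 by auto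
    have t2: "\<beta> k * Hfun C y \<le> \<beta> k * (z \<bullet> (y - xs))"
    proof -
      have "Hfun C y \<le> z \<bullet> (y - xs)" using zi H zero_le_power2[of "norm z"] by linarith
      then show ?thesis using ab(3) A6(3) by (intro mult_left_mono) auto
    qed
    have t3: "\<gamma> k * Gfun F Q y \<le> \<gamma> k * (v \<bullet> (y - xs))"
    proof -
      have "Gfun F Q y \<le> v \<bullet> (y - xs)" using vi G zero_le_power2[of "norm \<rho>"] by linarith
      then show ?thesis using ab(4) A6(5) by (intro mult_left_mono) auto
    qed
    have t1: "\<alpha> k * max \<Delta> 0 - K \<le> (if \<Delta> \<ge> 0 then \<alpha> k else 0) * (w \<bullet> (y - xs))"
    proof (cases "\<Delta> \<ge> 0")
      case True
      have "\<alpha> k * (phistar F C Q r - philb F C r) \<le> \<alpha>hi * eps0"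
        using ab sig A6 by (intro mult_mono) auto
      moreover have "\<alpha> k * (phi F C r y - phistar F C Q r) \<le> \<alpha> k * (w \<bullet> (y - xs))"
        using wi ab A6(1) by (intro mult_left_mono) auto
      ultimately show ?thesis using True unfolding K_def \<Delta>_def
        by (simp add: algebra_simps)
    next
      case False then show ?thesis using Kn by simp
    qed
    show ?thesis using t1 t2 t3 Phik dk_in by linarith
  qed
  have Phinn: "0 \<le> \<Phi> k" for k
  proof -
    have "0 \<le> \<alpha> k" "0 \<le> \<beta> k" "0 \<le> \<gamma> k" using A6 by (meson less_le_trans less_imp_le)+
    then show ?thesis unfolding \<Phi>_def Phival_def Hfun_def Gfun_def by simp
  qed
  have desc: "(norm (x (Suc k) - xs))\<^sup>2 \<le> (norm (x k - xs))\<^sup>2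
      - 2 * (lam k / max \<mu> (norm (d k))) * (\<Phi> k - K) + (lam k)\<^sup>2" for k
  proof -
    define t where "t = lam k / max \<mu> (norm (d k))"
    define a where "a = x k - xs"
    have xs1: "x (Suc k) - xs = a - t *\<^sub>R d k" using iter unfolding t_def a_def d_def by simp
    have eq: "(norm (a - t *\<^sub>R d k))\<^sup>2 = (norm a)\<^sup>2 - 2 * t * (d k \<bullet> a) + (t * norm (d k))\<^sup>2"
    proof -
      have "(norm (a - t *\<^sub>R d k))\<^sup>2 = (a - t *\<^sub>R d k) \<bullet> (a - t *\<^sub>R d k)"
        by (rule power2_norm_eq_inner)
      also have "\<dots> = a \<bullet> a - 2 * t * (d k \<bullet> a) + t\<^sup>2 * (d k \<bullet> d k)"
        by (simp add: inner_diff_left inner_diff_right inner_commute algebra_simps power2_eq_square)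
      also have "\<dots> = (norm a)\<^sup>2 - 2 * t * (d k \<bullet> a) + (t * norm (d k))\<^sup>2"
        by (simp add: dot_square_norm power_mult_distrib)
      finally show ?thesis .
    qed
    have mpos: "0 < max \<mu> (norm (d k))" using mu_pos by simp
    have t0: "0 \<le> t" unfolding t_def using A5(1) mpos by (simp add: less_imp_le)
    have "t * norm (d k) \<le> lam k"
    proof -
      have "t * norm (d k) = lam k * (norm (d k) / max \<mu> (norm (d k)))" unfolding t_def by simp
      also have "\<dots> \<le> lam k * 1" using A5(1) mpos
        by (intro mult_left_mono) (auto simp: less_imp_le divide_le_eq_1)
      finally show ?thesis by simp
    qed
    then have "(t * norm (d k))\<^sup>2 \<le> (lam k)\<^sup>2" using t0 by (intro power_mono) auto
    moreover have "t * (\<Phi> k - K) \<le> t * (d k \<bullet> a)" unfolding a_def using key[of k] t0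
      by (intro mult_left_mono) auto
    ultimately show ?thesis using xs1 eq unfolding t_def[symmetric] a_def[symmetric] by simp
  qed
  have freq: "\<forall>e>0. \<forall>N. \<exists>k\<ge>N. \<Phi> k < K + e"
  proof (rule ccontr)
    assume "\<not> (\<forall>e>0. \<forall>N. \<exists>k\<ge>N. \<Phi> k < K + e)"
    then obtain e N where e: "e > 0" "\<And>k. k \<ge> N \<Longrightarrow> K + e \<le> \<Phi> k" by (auto simp: not_less)
    define eb where "eb = max \<mu> Mbar"
    have ebpos: "0 < eb" unfolding eb_def using mu_pos by simp
    define a where "a k = (norm (x k - xs))\<^sup>2" for k
    define c where "c = 2 * e / eb"
    have cpos: "0 < c" unfolding c_def using e ebpos by simp
    have step: "a (Suc k) + c * lam k \<le> a k + (lam k)\<^sup>2" if "k \<ge> N" for k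
    proof -
      have mpos: "0 < max \<mu> (norm (d k))" using mu_pos by simp
      have "max \<mu> (norm (d k)) \<le> eb" unfolding eb_def d_def by (rule max.mono[OF order_refl Mbar[rule_format]])
      then have "lam k / eb \<le> lam k / max \<mu> (norm (d k))"
        using A5(1) mpos by (intro divide_left_mono) (auto simp: less_imp_le)
      then have "(lam k / eb) * e \<le> (lam k / max \<mu> (norm (d k))) * (\<Phi> k - K)"
        using e(1) e(2)[OF that] A5(1) ebpos mpos by (intro mult_mono) (auto simp: less_imp_le)
      moreover have "c * lam k = 2 * ((lam k / eb) * e)" unfolding c_def by simp
      ultimately have "c * lam k \<le> 2 * (lam k / max \<mu> (norm (d k))) * (\<Phi> k - K)"
        by linarith
      then show ?thesis using desc[of k] unfolding a_def by linarith
    qed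
    have ind: "a (N + m) + c * (\<Sum>k\<in>{N..<N+m}. lam k) \<le> a N + (\<Sum>k\<in>{N..<N+m}. (lam k)\<^sup>2)" for m
    proof (induction m)
      case 0 then show ?case by simp
    next
      case (Suc m)
      have "a (Suc (N + m)) + c * lam (N + m) \<le> a (N + m) + (lam (N + m))\<^sup>2" by (rule step) simp
      then show ?case using Suc.IH by (simp add: algebra_simps)
    qed
    define S2 where "S2 = suminf (\<lambda>k. (lam k)\<^sup>2)"
    have bnd: "(\<Sum>k\<in>{N..<N+m}. lam k) \<le> (a N + S2) / c" for m
    proof -
      have "(\<Sum>k\<in>{N..<N+m}. (lam k)\<^sup>2) \<le> S2" unfolding S2_def
        by (rule sum_le_suminf[OF A5(3)]) auto
      moreover have "0 \<le> a (N + m)" unfolding a_def by simp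
      ultimately have "c * (\<Sum>k\<in>{N..<N+m}. lam k) \<le> a N + S2" using ind[of m] by linarith
      then show ?thesis using cpos by (simp add: field_simps)
    qed
    have "summable lam"
    proof (rule summableI_nonneg_bounded)
      show "0 \<le> lam n" for n using A5(1) less_imp_le by blast
      fix n
      have "(\<Sum>i<n. lam i) \<le> (\<Sum>i<N+n. lam i)"
        using A5(1) by (intro sum_mono2) (auto simp: less_imp_le)
      also have "\<dots> = (\<Sum>i<N. lam i) + (\<Sum>k\<in>{N..<N+n}. lam k)"
        by (simp add: atLeast0LessThan[symmetric] sum.atLeastLessThan_concat)
      also have "\<dots> \<le> (\<Sum>i<N. lam i) + (a N + S2) / c" using bnd[of n] by simp
      finally show "(\<Sum>i<n. lam i) \<le> (\<Sum>i<N. lam i) + (a N + S2) / c" .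
    qed
    then show False using A5(2) by simp
  qed
  obtain kj ell where kj: "strict_mono kj" "0 \<le> ell" "ell \<le> K" "(\<lambda>j. \<Phi> (kj j)) \<longlonglongrightarrow> ell"
    using subseq_from_freq[OF freq] Phinn by blast
  define Cs where "Cs = \<alpha>hi * max \<mu> Mbar / \<mu>"
  have Cs_ge: "K \<le> Cs * eps0"
  proof -
    have "1 \<le> max \<mu> Mbar / \<mu>" using mu_pos by simp
    then have "\<alpha>hi * 1 \<le> \<alpha>hi * (max \<mu> Mbar / \<mu>)" using A6 by (intro mult_left_mono) auto
    then show ?thesis unfolding K_def Cs_def using A7'(1) by (intro mult_right_mono) auto
  qed
  have ellC: "ell \<le> Cs * eps0" using kj(3) Cs_ge by linarith
  have bounds: "\<beta>lo * Hfun C (x k) \<le> \<Phi> k \<and> \<gamma>lo * Gfun F Q (x k) \<le> \<Phi> k \<and>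
      \<alpha>lo * (phi F C r (x k) - philb F C r) \<le> \<Phi> k" for k
  proof -
    define \<Delta> where "\<Delta> = phi F C r (x k) - philb F C r"
    have ab: "\<alpha>lo \<le> \<alpha> k" "\<beta>lo \<le> \<beta> k" "\<gamma>lo \<le> \<gamma> k" using A6 by auto
    have H0: "0 \<le> Hfun C (x k)" "0 \<le> Gfun F Q (x k)" by (simp_all add: Hfun_def Gfun_def)
    have e1: "\<beta>lo * Hfun C (x k) \<le> \<beta> k * Hfun C (x k)" using ab H0 by (intro mult_right_mono)
    have e2: "\<gamma>lo * Gfun F Q (x k) \<le> \<gamma> k * Gfun F Q (x k)" using ab H0 by (intro mult_right_mono)
    have e3: "\<alpha>lo * \<Delta> \<le> \<alpha> k * max \<Delta> 0"
    proof -
      have "\<alpha>lo * \<Delta> \<le> \<alpha>lo * max \<Delta> 0" using A6(1) by (intro mult_left_mono) auto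
      also have "\<dots> \<le> \<alpha> k * max \<Delta> 0" using ab by (intro mult_right_mono) auto
      finally show ?thesis .
    qed
    have p1: "0 \<le> \<alpha> k * max \<Delta> 0" using ab A6(1) by simp
    have p2: "0 \<le> \<beta> k * Hfun C (x k)" using ab A6(3) H0 by simp
    have p3: "0 \<le> \<gamma> k * Gfun F Q (x k)" using ab A6(5) H0 by simp
    have "\<Phi> k = \<alpha> k * max \<Delta> 0 + \<beta> k * Hfun C (x k) + \<gamma> k * Gfun F Q (x k)"
      unfolding \<Phi>_def Phival_def \<Delta>_def by simp
    then show ?thesis using e1 e2 e3 p1 p2 p3 unfolding \<Delta>_def by linarith
  qed
  show ?thesis
  proof (intro exI conjI allI impI)
    show "strict_mono kj" "0 \<le> ell" by (rule kj)+
    show "ell \<le> \<alpha>hi * max \<mu> Mbar / \<mu> * eps0" using ellC unfolding Cs_def .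
    show "(\<lambda>j. Phival F C Q r (\<alpha> (kj j)) (\<beta> (kj j)) (\<gamma> (kj j)) (x (kj j))) \<longlonglongrightarrow> ell"
      using kj(4) unfolding \<Phi>_def .
    fix xh assume "\<exists>h. strict_mono h \<and> (x \<circ> kj \<circ> h) \<longlonglongrightarrow> xh"
    then obtain h where h: "strict_mono h" "(x \<circ> kj \<circ> h) \<longlonglongrightarrow> xh" by blast
    define yy where "yy n = x (kj (h n))" for n
    have yl: "yy \<longlonglongrightarrow> xh" using h(2) unfolding yy_def by (simp add: o_def)
    have Pl: "(\<lambda>n. \<Phi> (kj (h n))) \<longlonglongrightarrow> ell"
      using LIMSEQ_subseq_LIMSEQ[OF kj(4) h(1)] by (simp add: o_def)
    have Fcomp: "(\<lambda>n. F (yy n) $ i) \<longlonglongrightarrow> F xh $ i" for i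
    proof -
      have "isCont (\<lambda>u. F u $ i) xh"
        using A1_deriv has_derivative_continuous by blast
      then show ?thesis by (rule isCont_tendsto_compose[OF _ yl])
    qed
    have Fl: "(\<lambda>n. F (yy n)) \<longlonglongrightarrow> F xh"
      using tendsto_vec_lambda[of "\<lambda>n i. F (yy n) $ i", OF Fcomp] by (simp add: vec_lambda_eta)
    have Hl: "(\<lambda>n. \<beta>lo * Hfun C (yy n)) \<longlonglongrightarrow> \<beta>lo * Hfun C xh"
      unfolding Hfun_def by (intro tendsto_intros yl) simp
    have Gl: "(\<lambda>n. \<gamma>lo * Gfun F Q (yy n)) \<longlonglongrightarrow> \<gamma>lo * Gfun F Q xh"
      unfolding Gfun_def by (intro tendsto_intros Fl) simp
    have Hb: "\<beta>lo * Hfun C xh \<le> ell"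
      by (rule LIMSEQ_le[OF Hl Pl]) (use bounds yy_def in auto)
    have Gb: "\<gamma>lo * Gfun F Q xh \<le> ell"
      by (rule LIMSEQ_le[OF Gl Pl]) (use bounds yy_def in auto)
    have phib: "phi F C r xh \<le> philb F C r + ell / \<alpha>lo"
    proof (rule phi_le)
      fix j
      have l: "(\<lambda>n. \<alpha>lo * (r$j * (F (yy n) $ j - zstar F C j) - philb F C r)) \<longlonglongrightarrow>
            \<alpha>lo * (r$j * (F xh $ j - zstar F C j) - philb F C r)"
        by (intro tendsto_intros Fcomp)
      have "\<alpha>lo * (r$j * (F xh $ j - zstar F C j) - philb F C r) \<le> ell"
      proof (rule LIMSEQ_le[OF l Pl], intro exI allI impI)
        fix n
        have "\<alpha>lo * (r$j * (F (yy n) $ j - zstar F C j) - philb F C r)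
            \<le> \<alpha>lo * (phi F C r (yy n) - philb F C r)"
          using phi_ge A6(1) by (intro mult_left_mono) auto
        also have "\<dots> \<le> \<Phi> (kj (h n))" using bounds unfolding yy_def by blast
        finally show "\<alpha>lo * (r$j * (F (yy n) $ j - zstar F C j) - philb F C r) \<le> \<Phi> (kj (h n))" .
      qed
      then show "r$j * (F xh $ j - zstar F C j) \<le> philb F C r + ell / \<alpha>lo"
        using A6(1) by (simp add: field_simps)
    qed
    have H1: "Hfun C xh \<le> ell / \<beta>lo" using Hb A6(3) by (simp add: field_simps)
    have G1: "Gfun F Q xh \<le> ell / \<gamma>lo" using Gb A6(5) by (simp add: field_simps)
    show "Hfun C xh \<le> ell / \<beta>lo" by (rule H1)
    show "Gfun F Q xh \<le> ell / \<gamma>lo" by (rule G1)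
    show "phi F C r xh \<le> philb F C r + ell / \<alpha>lo" by (rule phib)
    have H2: "ell / \<beta>lo \<le> Cs * eps0 / \<beta>lo" using ellC A6(3) by (intro divide_right_mono) auto
    have G2: "ell / \<gamma>lo \<le> Cs * eps0 / \<gamma>lo" using ellC A6(5) by (intro divide_right_mono) auto
    have A2': "ell / \<alpha>lo \<le> Cs * eps0 / \<alpha>lo" using ellC A6(1) by (intro divide_right_mono) auto
    show "ell / \<beta>lo \<le> \<alpha>hi * max \<mu> Mbar / \<mu> * eps0 / \<beta>lo" using H2 unfolding Cs_def .
    show "ell / \<gamma>lo \<le> \<alpha>hi * max \<mu> Mbar / \<mu> * eps0 / \<gamma>lo" using G2 unfolding Cs_def .
    show "philb F C r + ell / \<alpha>lo \<le> phistar F C Q r + \<alpha>hi * max \<mu> Mbar / \<mu> * eps0 / \<alpha>lo"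
      using A2' lb_le unfolding Cs_def by linarith
    show "infdist xh C \<le> sqrt (2 * (\<alpha>hi * max \<mu> Mbar / \<mu>) * eps0 / \<beta>lo)"
    proof (rule real_le_rsqrt)
      have "(infdist xh C)\<^sup>2 / 2 \<le> Cs * eps0 / \<beta>lo" using H1 H2 unfolding Hfun_def by linarith
      then show "(infdist xh C)\<^sup>2 \<le> 2 * (\<alpha>hi * max \<mu> Mbar / \<mu>) * eps0 / \<beta>lo"
        unfolding Cs_def by (simp add: field_simps)
    qed
    show "infdist (F xh) (Qplus Q) \<le> sqrt (2 * (\<alpha>hi * max \<mu> Mbar / \<mu>) * eps0 / \<gamma>lo)"
    proof (rule real_le_rsqrt)
      have "(infdist (F xh) (Qplus Q))\<^sup>2 / 2 \<le> Cs * eps0 / \<gamma>lo" using G1 G2 unfolding Gfun_def by linarith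
      then show "(infdist (F xh) (Qplus Q))\<^sup>2 \<le> 2 * (\<alpha>hi * max \<mu> Mbar / \<mu>) * eps0 / \<gamma>lo"
        unfolding Cs_def by (simp add: field_simps)
    qed
    assume e0: "eps0 = 0"
    then have ell0: "ell = 0" using ellC kj(2) by simp
    then show "ell = 0" .
    have "Hfun C xh = 0" using H1 ell0 by (simp add: Hfun_def)
    moreover have "Gfun F Q xh = 0" using G1 ell0 by (simp add: Gfun_def)
    ultimately have xhF: "xh \<in> feas F C Q" by (simp add: feas_def)
    have "phistar F C Q r \<le> phi F C r xh" unfolding phistar_def
      by (rule cInf_lower) (use xhF feasC phi_nn in \<open>auto intro!: bdd_belowI[of _ 0]\<close>)
    moreover have "phi F C r xh \<le> phistar F C Q r" using phib ell0 lb_le by simp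
    ultimately show "xh \<in> Omega F C Q r" using xhF by (simp add: Omega_def)
  qed
qed

end
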